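(* If $\Lambda$ is a Legendrian knot with $4|\operatorname{rot}(\Lambda)|+\operatorname{tb}(\Lambda)\ge 0$, then $$m(\Lambda)\ge\left\lceil\sqrt{4|\operatorname{rot}(\Lambda)|+\operatorname{tb}(\Lambda)}\right\rceil.$$
   Context: Legendrian knots are taken in the standard contact structure on $\mathbb{R}^3$ and represented by front ($xz$-) projections, which have cusps in place of vertical tangencies and in which the strand of more negative slope is the overstrand at every crossing. For an oriented front with $P$ positive crossings, $N$ negative crossings, $C$ cusps, $D$ downward-oriented and $U$ upward-oriented cusps, the Thurston–Bennequin number is $\operatorname{tb}=P-N-\frac12C$ and the rotation number is $\operatorname{rot}=\frac12(D-U)$ (Legendrian isotopy invariants; the sign of $\operatorname{rot}$ depends on orientation). Legendrian mosaic tiles: a square tile whose four edge midpoints are potential connection points; the tiles are $T_0$ (empty); $T_1,\dots,T_4$ (a single arc joining midpoints of two adjacent edges, one per pair of adjacent edges); $T_5,T_6$ (a segment joining midpoints of opposite edges); $T_7,T_8$ (two disjoint arcs each joining adjacent edges, using all four midpoints); $T_{10}$ (two crossing segments joining opposite edges). A Legendrian $n$-mosaic is an $n\times n$ array of these tiles with the array rotated $45^\circ$ counterclockwise so the strands form a front diagram (after rotation $T_2$, $T_4$ contain one cusp and $T_8$ two cusps; $T_1,T_3,T_7$ contain none; in $T_{10}$ the negative-slope strand is over). It is suitably connected if connection points agree across shared edges and none lies on the outer boundary. The mosaic number $m(\Lambda)$ of a Legendrian knot $\Lambda$ is the smallest $n$ such that some suitably connected Legendrian $n$-mosaic depicts a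 front of a Legendrian knot Legendrian isotopic to $\Lambda$. *)

theory Defs
  imports Complex_Main
begin

text \<open>Edge midpoints of a (pre-rotation) square tile: north, east, south, west.
  Rows are indexed top to bottom, columns left to right.  After rotating the array
  45 degrees counterclockwise, N goes to the upper left, E to the upper right,
  S to the lower right and W to the lower left.\<close>
datatype edge = eN | eE | eS | eW

text \<open>Legendrian mosaic tiles (there is no T9).\<close>
datatype tile = T0 | T1 | T2 | T3 | T4 | T5 | T6 | T7 | T8 | T10

text \<open>T1, T3 (and T7) join N-E / S-W (no cusp after rotation); T2, T4 (and T8) join
  N-W / E-S (one cusp each after rotation); T5 joins W-E, T6 joins N-S;
  in T10 the N-S strand (negative slope after rotation) is the over strand.\<close>
fun arcs :: "tile \<Rightarrow> edge set set" where
  "arcs T0 = {}"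
| "arcs T1 = {{eS, eW}}"
| "arcs T2 = {{eW, eN}}"
| "arcs T3 = {{eN, eE}}"
| "arcs T4 = {{eE, eS}}"
| "arcs T5 = {{eW, eE}}"
| "arcs T6 = {{eN, eS}}"
| "arcs T7 = {{eN, eE}, {eS, eW}}"
| "arcs T8 = {{eN, eW}, {eE, eS}}"
| "arcs T10 = {{eN, eS}, {eW, eE}}"

definition conn :: "tile \<Rightarrow> edge set" where
  "conn t = \<Union> (arcs t)"

type_synonym mosaic = "nat \<Rightarrow> nat \<Rightarrow> tile"

text \<open>A visit of an oriented traversal: tile position (row, column), entry edge, exit edge.\<close>
type_synonym visit = "nat \<times> nat \<times> edge \<times> edge"

fun step :: "nat \<times> nat \<Rightarrow> edge \<Rightarrow> nat \<times> nat" where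
  "step (i, j) eN = (i - 1, j)"
| "step (i, j) eS = (Suc i, j)"
| "step (i, j) eE = (i, Suc j)"
| "step (i, j) eW = (i, j - 1)"

fun opp :: "edge \<Rightarrow> edge" where
  "opp eN = eS" | "opp eS = eN" | "opp eE = eW" | "opp eW = eE"

fun vpos :: "visit \<Rightarrow> nat \<times> nat" where "vpos (i, j, a, b) = (i, j)"
fun ventry :: "visit \<Rightarrow> edge" where "ventry (i, j, a, b) = a"
fun vexit :: "visit \<Rightarrow> edge" where "vexit (i, j, a, b) = b"
fun varc :: "visit \<Rightarrow> nat \<times> nat \<times> edge set" where "varc (i, j, a, b) = (i, j, {a, b})"

definition suitably_connected :: "nat \<Rightarrow> mosaic \<Rightarrow> bool" where
  "suitably_connected n M \<longleftrightarrow>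
     (\<forall>i<n. \<forall>j<n.
        (eN \<in> conn (M i j) \<longleftrightarrow> 0 < i \<and> eS \<in> conn (M (i - 1) j)) \<and>
        (eW \<in> conn (M i j) \<longleftrightarrow> 0 < j \<and> eE \<in> conn (M i (j - 1))) \<and>
        (eS \<in> conn (M i j) \<longrightarrow> Suc i < n) \<and>
        (eE \<in> conn (M i j) \<longrightarrow> Suc j < n))"

text \<open>vs is an oriented traversal of the diagram as a single closed curve passing through
  every strand of every tile exactly once (so the depicted link is a knot).\<close>
definition knot_traversal :: "nat \<Rightarrow> mosaic \<Rightarrow> visit list \<Rightarrow> bool" where
  "knot_traversal n M vs \<longleftrightarrow>
     vs \<noteq> [] \<and>
     (\<forall>v\<in>set vs. fst (vpos v) < n \<and> snd (vpos v) < n \<and> ventry v \<noteq> vexit v \<and>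
         {ventry v, vexit v} \<in> arcs (M (fst (vpos v)) (snd (vpos v)))) \<and>
     (\<forall>k<length vs.
         vpos (vs ! ((k + 1) mod length vs)) = step (vpos (vs ! k)) (vexit (vs ! k)) \<and>
         ventry (vs ! ((k + 1) mod length vs)) = opp (vexit (vs ! k))) \<and>
     distinct (map varc vs) \<and>
     (\<forall>i<n. \<forall>j<n. \<forall>A\<in>arcs (M i j). \<exists>v\<in>set vs. varc v = (i, j, A))"

definition legendrian_knot_mosaic :: "nat \<Rightarrow> mosaic \<Rightarrow> visit list \<Rightarrow> bool" where
  "legendrian_knot_mosaic n M vs \<longleftrightarrow> suitably_connected n M \<and> knot_traversal n M vs"

text \<open>Cusps (tiles N-W and E-S after rotation); downward means traversed N to W or E to S.\<close>
definition down_cusps :: "visit list \<Rightarrow> nat" where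
  "down_cusps vs = length (filter (\<lambda>v. (ventry v, vexit v) = (eN, eW) \<or> (ventry v, vexit v) = (eE, eS)) vs)"

definition up_cusps :: "visit list \<Rightarrow> nat" where
  "up_cusps vs = length (filter (\<lambda>v. (ventry v, vexit v) = (eW, eN) \<or> (ventry v, vexit v) = (eS, eE)) vs)"

text \<open>Crossings are counted through their over strand (N-S strand of a T10 tile).
  With the over strand direction o and under strand direction u, the crossing is
  positive iff o \<times> u > 0 (right-handed), i.e. iff (N\<rightarrow>S over, W\<rightarrow>E under) or
  (S\<rightarrow>N over, E\<rightarrow>W under).\<close>
definition pos_crossings :: "mosaic \<Rightarrow> visit list \<Rightarrow> nat" where
  "pos_crossings M vs = length (filter (\<lambda>v. M (fst (vpos v)) (snd (vpos v)) = T10 \<and>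
      ((ventry v, vexit v) = (eN, eS) \<and> (fst (vpos v), snd (vpos v), eW, eE) \<in> set vs \<or>
       (ventry v, vexit v) = (eS, eN) \<and> (fst (vpos v), snd (vpos v), eE, eW) \<in> set vs)) vs)"

definition neg_crossings :: "mosaic \<Rightarrow> visit list \<Rightarrow> nat" where
  "neg_crossings M vs = length (filter (\<lambda>v. M (fst (vpos v)) (snd (vpos v)) = T10 \<and>
      ((ventry v, vexit v) = (eN, eS) \<and> (fst (vpos v), snd (vpos v), eE, eW) \<in> set vs \<or>
       (ventry v, vexit v) = (eS, eN) \<and> (fst (vpos v), snd (vpos v), eW, eE) \<in> set vs)) vs)"

definition tb_mosaic :: "mosaic \<Rightarrow> visit list \<Rightarrow> real" where
  "tb_mosaic M vs = real (pos_crossings M vs) - real (neg_crossings M vs)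
                     - real (down_cusps vs + up_cusps vs) / 2"

definition rot_mosaic :: "visit list \<Rightarrow> real" where
  "rot_mosaic vs = (real (down_cusps vs) - real (up_cusps vs)) / 2"

text \<open>Mosaic number of a Legendrian knot K, relative to the relation
  depicts n M vs K: "the oriented Legendrian n-mosaic (M, vs) depicts a front of a
  Legendrian knot Legendrian isotopic to K".\<close>
definition mosaic_number :: "(nat \<Rightarrow> mosaic \<Rightarrow> visit list \<Rightarrow> 'k \<Rightarrow> bool) \<Rightarrow> 'k \<Rightarrow> nat" where
  "mosaic_number depicts K = (LEAST n. \<exists>M vs. depicts n M vs K)"

end

theory Submission
  imports Defs
begin


fun dz :: "edge \<Rightarrow> real" where
  "dz eE = 1" | "dz eN = 1" | "dz eW = -1" | "dz eS = -1"

definition isdown :: "edge \<Rightarrow> edge \<Rightarrow> bool" where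
  "isdown a b \<longleftrightarrow> (a, b) = (eN, eW) \<or> (a, b) = (eE, eS)"
definition isup :: "edge \<Rightarrow> edge \<Rightarrow> bool" where
  "isup a b \<longleftrightarrow> (a, b) = (eW, eN) \<or> (a, b) = (eS, eE)"

definition cw :: "real \<Rightarrow> edge \<Rightarrow> edge \<Rightarrow> real" where
  "cw s a b = (if isdown a b then 2*s - 1/2 else if isup a b then -2*s - 1/2 else 0)"

definition isP :: "tile \<Rightarrow> (edge \<times> edge) set \<Rightarrow> edge \<Rightarrow> edge \<Rightarrow> bool" where
  "isP T S a b \<longleftrightarrow> T = T10 \<and> ((a, b) = (eN, eS) \<and> (eW, eE) \<in> S \<or> (a, b) = (eS, eN) \<and> (eE, eW) \<in> S)"
definition isN :: "tile \<Rightarrow> (edge \<times> edge) set \<Rightarrow> edge \<Rightarrow> edge \<Rightarrow> bool" where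
  "isN T S a b \<longleftrightarrow> T = T10 \<and> ((a, b) = (eN, eS) \<and> (eE, eW) \<in> S \<or> (a, b) = (eS, eN) \<and> (eW, eE) \<in> S)"

definition F :: "real \<Rightarrow> tile \<Rightarrow> (edge \<times> edge) set \<Rightarrow> edge \<Rightarrow> edge \<Rightarrow> real" where
  "F s T S a b = cw s a b + s * dz b + (if isP T S a b then 1 else 0) - (if isN T S a b then 1 else 0)"

definition orient :: "tile \<Rightarrow> (edge \<times> edge) set" where
  "orient T = {(a, b). a \<noteq> b \<and> {a, b} \<in> arcs T}"

lemma orient_simps:
  "orient T0 = {}"
  "orient T1 = {(eS,eW),(eW,eS)}"
  "orient T2 = {(eW,eN),(eN,eW)}"
  "orient T3 = {(eN,eE),(eE,eN)}"
  "orient T4 = {(eE,eS),(eS,eE)}"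
  "orient T5 = {(eW,eE),(eE,eW)}"
  "orient T6 = {(eN,eS),(eS,eN)}"
  "orient T7 = {(eN,eE),(eE,eN),(eS,eW),(eW,eS)}"
  "orient T8 = {(eN,eW),(eW,eN),(eE,eS),(eS,eE)}"
  "orient T10 = {(eN,eS),(eS,eN),(eW,eE),(eE,eW)}"
  by (auto simp: orient_def doubleton_eq_iff)

lemma restr: "S \<subseteq> A \<Longrightarrow> finite A \<Longrightarrow> sum f S = (\<Sum>x\<in>A. if x \<in> S then f x else 0)"
  by (metis inf.absorb_iff2 sum.inter_restrict)

lemma local_bound:
  assumes s: "s = 1 \<or> s = -1"
    and sub: "S \<subseteq> orient T"
    and uniq: "\<And>a b a' b'. (a, b) \<in> S \<Longrightarrow> (a', b') \<in> S \<Longrightarrow> {a, b} = {a', b'} \<Longrightarrow> (a, b) = (a', b')"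
  shows "(\<Sum>(a, b)\<in>S. F s T S a b) \<le> 1"
proof (cases T)
  case T0
  then have "S = {}" using sub by (simp add: orient_simps)
  then show ?thesis by simp
next
  case T1
  have h0: "S \<subseteq> {(eS,eW),(eW,eS)}" using sub T1 by (simp add: orient_simps)
  have h1: "\<not> ((eS,eW) \<in> S \<and> (eW,eS) \<in> S)" using uniq[of eS eW eW eS] by (auto simp: insert_commute)
  show ?thesis
    apply (subst restr[OF h0], simp)
    using s T1 h1 by (elim disjE; simp add: F_def cw_def isdown_def isup_def isP_def isN_def)
next
  case T2
  have h0: "S \<subseteq> {(eW,eN),(eN,eW)}" using sub T2 by (simp add: orient_simps)
  have h1: "\<not> ((eW,eN) \<in> S \<and> (eN,eW) \<in> S)" using uniq[of eW eN eN eW] by (auto simp: insert_commute)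
  show ?thesis
    apply (subst restr[OF h0], simp)
    using s T2 h1 by (elim disjE; simp add: F_def cw_def isdown_def isup_def isP_def isN_def)
next
  case T3
  have h0: "S \<subseteq> {(eN,eE),(eE,eN)}" using sub T3 by (simp add: orient_simps)
  have h1: "\<not> ((eN,eE) \<in> S \<and> (eE,eN) \<in> S)" using uniq[of eN eE eE eN] by (auto simp: insert_commute)
  show ?thesis
    apply (subst restr[OF h0], simp)
    using s T3 h1 by (elim disjE; simp add: F_def cw_def isdown_def isup_def isP_def isN_def)
next
  case T4
  have h0: "S \<subseteq> {(eE,eS),(eS,eE)}" using sub T4 by (simp add: orient_simps)
  have h1: "\<not> ((eE,eS) \<in> S \<and> (eS,eE) \<in> S)" using uniq[of eE eS eS eE] by (auto simp: insert_commute)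
  show ?thesis
    apply (subst restr[OF h0], simp)
    using s T4 h1 by (elim disjE; simp add: F_def cw_def isdown_def isup_def isP_def isN_def)
next
  case T5
  have h0: "S \<subseteq> {(eW,eE),(eE,eW)}" using sub T5 by (simp add: orient_simps)
  have h1: "\<not> ((eW,eE) \<in> S \<and> (eE,eW) \<in> S)" using uniq[of eW eE eE eW] by (auto simp: insert_commute)
  show ?thesis
    apply (subst restr[OF h0], simp)
    using s T5 h1 by (elim disjE; simp add: F_def cw_def isdown_def isup_def isP_def isN_def)
next
  case T6
  have h0: "S \<subseteq> {(eN,eS),(eS,eN)}" using sub T6 by (simp add: orient_simps)
  have h1: "\<not> ((eN,eS) \<in> S \<and> (eS,eN) \<in> S)" using uniq[of eN eS eS eN] by (auto simp: insert_commute)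
  show ?thesis
    apply (subst restr[OF h0], simp)
    using s T6 h1 by (elim disjE; simp add: F_def cw_def isdown_def isup_def isP_def isN_def)
next
  case T7
  have h0: "S \<subseteq> {(eN,eE),(eE,eN),(eS,eW),(eW,eS)}" using sub T7 by (simp add: orient_simps)
  have h1: "\<not> ((eN,eE) \<in> S \<and> (eE,eN) \<in> S)" using uniq[of eN eE eE eN] by (auto simp: insert_commute)
  have h2: "\<not> ((eS,eW) \<in> S \<and> (eW,eS) \<in> S)" using uniq[of eS eW eW eS] by (auto simp: insert_commute)
  show ?thesis
    apply (subst restr[OF h0], simp)
    using s T7 h1 h2 by (elim disjE; simp add: F_def cw_def isdown_def isup_def isP_def isN_def)
next
  case T8
  have h0: "S \<subseteq> {(eN,eW),(eW,eN),(eE,eS),(eS,eE)}" using sub T8 by (simp add: orient_simps)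
  have h1: "\<not> ((eN,eW) \<in> S \<and> (eW,eN) \<in> S)" using uniq[of eN eW eW eN] by (auto simp: insert_commute)
  have h2: "\<not> ((eE,eS) \<in> S \<and> (eS,eE) \<in> S)" using uniq[of eE eS eS eE] by (auto simp: insert_commute)
  show ?thesis
    apply (subst restr[OF h0], simp)
    using s T8 h1 h2 by (elim disjE; simp add: F_def cw_def isdown_def isup_def isP_def isN_def)
next
  case T10
  have h0: "S \<subseteq> {(eN,eS),(eS,eN),(eW,eE),(eE,eW)}" using sub T10 by (simp add: orient_simps)
  have h1: "\<not> ((eN,eS) \<in> S \<and> (eS,eN) \<in> S)" using uniq[of eN eS eS eN] by (auto simp: insert_commute)
  have h2: "\<not> ((eW,eE) \<in> S \<and> (eE,eW) \<in> S)" using uniq[of eW eE eE eW] by (auto simp: insert_commute)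
  show ?thesis
    apply (subst restr[OF h0], simp)
    using s T10 h1 h2 by (elim disjE; simp add: F_def cw_def isdown_def isup_def isP_def isN_def)
qed



lemma count_sum: "real (length (filter P xs)) = sum_list (map (\<lambda>v. if P v then 1 else 0) xs)"
  by (induction xs) auto

lemma rot_sum:
  fixes g :: "nat \<Rightarrow> real"
  assumes "0 < L"
  shows "(\<Sum>k<L. g ((k + 1) mod L)) = (\<Sum>k<L. g k)"
proof -
  obtain m where L: "L = Suc m" using assms by (cases L) auto
  have "(\<Sum>k<Suc m. g ((k + 1) mod Suc m)) = (\<Sum>k<m. g ((k + 1) mod Suc m)) + g 0"
    by (simp add: sum.lessThan_Suc)
  also have "(\<Sum>k<m. g ((k + 1) mod Suc m)) = (\<Sum>k<m. g (Suc k))"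
    by (rule sum.cong) auto
  also have "\<dots> + g 0 = g 0 + (\<Sum>k<m. g (Suc k))" by simp
  also have "\<dots> = (\<Sum>k<Suc m. g k)"
    by (rule sum.lessThan_Suc_shift[symmetric])
  finally show ?thesis using L by simp
qed

definition zz :: "visit \<Rightarrow> real" where
  "zz v = real (snd (vpos v)) - real (fst (vpos v))"

lemma dz_sum_zero:
  assumes "legendrian_knot_mosaic n M vs"
  shows "(\<Sum>v\<in>set vs. dz (vexit v)) = 0"
proof -
  have sc: "suitably_connected n M" and kt: "knot_traversal n M vs"
    using assms by (auto simp: legendrian_knot_mosaic_def)
  define L where "L = length vs"
  have L0: "0 < L" using kt by (auto simp: knot_traversal_def L_def)
  have dist: "distinct vs"
    using kt by (auto simp: knot_traversal_def distinct_map)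
  have step: "dz (vexit (vs ! k)) = zz (vs ! ((k + 1) mod L)) - zz (vs ! k)" if k: "k < L" for k
  proof -
    obtain i j a b where v: "vs ! k = (i, j, a, b)" by (cases "vs ! k") auto
    have mem: "vs ! k \<in> set vs" using k by (simp add: L_def)
    have in1: "i < n" "j < n" "{a, b} \<in> arcs (M i j)"
      using kt mem v by (auto simp: knot_traversal_def)
    have bc: "b \<in> conn (M i j)" using in1(3) by (auto simp: conn_def)
    have nx: "vpos (vs ! ((k + 1) mod L)) = step (i, j) b"
      using kt k v by (auto simp: knot_traversal_def L_def)
    have cN: "b = eN \<Longrightarrow> 0 < i" and cW: "b = eW \<Longrightarrow> 0 < j"
      using sc in1 bc by (auto simp: suitably_connected_def)
    show ?thesis
      using nx v cN cW by (cases b) (auto simp: zz_def of_nat_diff)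
  qed
  have "(\<Sum>v\<in>set vs. dz (vexit v)) = sum_list (map (\<lambda>v. dz (vexit v)) vs)"
    using dist by (simp add: sum_list_distinct_conv_sum_set)
  also have "\<dots> = (\<Sum>k<L. dz (vexit (vs ! k)))"
    by (simp add: sum_list_sum_nth L_def atLeast0LessThan)
  also have "\<dots> = (\<Sum>k<L. zz (vs ! ((k + 1) mod L)) - zz (vs ! k))"
    using step by (rule sum.cong[OF refl]) simp
  also have "\<dots> = 0"
    using rot_sum[OF L0, of "\<lambda>k. zz (vs ! k)"] by (simp add: sum_subtractf)
  finally show ?thesis .
qed


definition Sp :: "visit list \<Rightarrow> nat \<Rightarrow> nat \<Rightarrow> (edge \<times> edge) set" where
  "Sp vs i j = {(a, b). (i, j, a, b) \<in> set vs}"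

definition G :: "real \<Rightarrow> mosaic \<Rightarrow> visit list \<Rightarrow> visit \<Rightarrow> real" where
  "G s M vs v = (case v of (i, j, a, b) \<Rightarrow> F s (M i j) (Sp vs i j) a b)"

lemma ind_sum:
  assumes "distinct xs"
  shows "(\<Sum>v\<in>set xs. if P v then 1 else 0) = (real (length (filter P xs)) :: real)"
  using assms by (simp add: count_sum sum_list_distinct_conv_sum_set)

lemma sum_G_eq:
  assumes lk: "legendrian_knot_mosaic n M vs"
  shows "(\<Sum>v\<in>set vs. G s M vs v) =
     (2*s - 1/2) * real (down_cusps vs) + (-2*s - 1/2) * real (up_cusps vs)
     + real (pos_crossings M vs) - real (neg_crossings M vs)"
proof -
  have kt: "knot_traversal n M vs" using lk by (simp add: legendrian_knot_mosaic_def)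
  have dist: "distinct vs" using kt by (auto simp: knot_traversal_def distinct_map)
  define Dp where "Dp = (\<lambda>v. (ventry v, vexit v) = (eN, eW) \<or> (ventry v, vexit v) = (eE, eS))"
  define Up where "Up = (\<lambda>v. (ventry v, vexit v) = (eW, eN) \<or> (ventry v, vexit v) = (eS, eE))"
  define Pp where "Pp = (\<lambda>v. M (fst (vpos v)) (snd (vpos v)) = T10 \<and>
      ((ventry v, vexit v) = (eN, eS) \<and> (fst (vpos v), snd (vpos v), eW, eE) \<in> set vs \<or>
       (ventry v, vexit v) = (eS, eN) \<and> (fst (vpos v), snd (vpos v), eE, eW) \<in> set vs))"
  define Np where "Np = (\<lambda>v. M (fst (vpos v)) (snd (vpos v)) = T10 \<and>
      ((ventry v, vexit v) = (eN, eS) \<and> (fst (vpos v), snd (vpos v), eE, eW) \<in> set vs \<or>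
       (ventry v, vexit v) = (eS, eN) \<and> (fst (vpos v), snd (vpos v), eW, eE) \<in> set vs))"
  have pw: "G s M vs v = (2*s - 1/2) * (if Dp v then 1 else 0) + (-2*s - 1/2) * (if Up v then 1 else 0)
      + s * dz (vexit v) + ((if Pp v then 1 else 0) - (if Np v then 1 else 0))" for v
  proof -
    obtain i j a b where v: "v = (i, j, a, b)" by (cases v) auto
    show ?thesis unfolding v
      by (auto simp: G_def F_def cw_def isdown_def isup_def isP_def isN_def Sp_def Dp_def Up_def Pp_def Np_def)
  qed
  have "(\<Sum>v\<in>set vs. G s M vs v) =
      (2*s - 1/2) * (\<Sum>v\<in>set vs. if Dp v then 1 else 0) + (-2*s - 1/2) * (\<Sum>v\<in>set vs. if Up v then 1 else 0)
      + s * (\<Sum>v\<in>set vs. dz (vexit v)) + ((\<Sum>v\<in>set vs. if Pp v then 1 else 0) - (\<Sum>v\<in>set vs. if Np v then 1 else 0))"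
    unfolding pw by (simp add: sum.distrib sum_subtractf sum_distrib_left)
  also have "\<dots> = (2*s - 1/2) * real (down_cusps vs) + (-2*s - 1/2) * real (up_cusps vs)
     + real (pos_crossings M vs) - real (neg_crossings M vs)"
    using dz_sum_zero[OF lk] ind_sum[OF dist]
    by (simp add: down_cusps_def up_cusps_def pos_crossings_def neg_crossings_def Dp_def Up_def Pp_def Np_def)
  finally show ?thesis .
qed

lemma sum_G_le:
  assumes lk: "legendrian_knot_mosaic n M vs" and s: "s = 1 \<or> s = -1"
  shows "(\<Sum>v\<in>set vs. G s M vs v) \<le> real n * real n"
proof -
  have kt: "knot_traversal n M vs" using lk by (simp add: legendrian_knot_mosaic_def)
  have injv: "inj_on varc (set vs)" using kt by (auto simp: knot_traversal_def distinct_map)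
  have img: "vpos ` set vs \<subseteq> {..<n} \<times> {..<n}"
    using kt by (auto simp: knot_traversal_def mem_Times_iff)
  have "(\<Sum>v\<in>set vs. G s M vs v) = (\<Sum>p\<in>{..<n} \<times> {..<n}. \<Sum>v\<in>{x. x \<in> set vs \<and> vpos x = p}. G s M vs v)"
    by (rule sum.group[symmetric]) (use img in auto)
  also have "\<dots> \<le> (\<Sum>p\<in>{..<n} \<times> {..<n}. (1::real))"
  proof (rule sum_mono)
    fix p assume "p \<in> {..<n} \<times> {..<n}"
    obtain i j where p: "p = (i, j)" by (cases p) auto
    have seteq: "{x. x \<in> set vs \<and> vpos x = p} = (\<lambda>(a, b). (i, j, a, b)) ` Sp vs i j"
      unfolding p Sp_def by force
    have inj: "inj_on (\<lambda>(a, b). (i, j, a, b)) (Sp vs i j)" by (auto simp: inj_on_def)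
    have "(\<Sum>v\<in>{x. x \<in> set vs \<and> vpos x = p}. G s M vs v) = (\<Sum>(a, b)\<in>Sp vs i j. F s (M i j) (Sp vs i j) a b)"
      unfolding seteq sum.reindex[OF inj] by (rule sum.cong) (auto simp: G_def)
    also have "\<dots> \<le> 1"
    proof (rule local_bound[OF s])
      show "Sp vs i j \<subseteq> orient (M i j)"
        using kt by (force simp: Sp_def orient_def knot_traversal_def)
      fix a b a' b'
      assume h: "(a, b) \<in> Sp vs i j" "(a', b') \<in> Sp vs i j" "{a, b} = {a', b'}"
      then have "varc (i, j, a, b) = varc (i, j, a', b')" by simp
      with injv h show "(a, b) = (a', b')" unfolding Sp_def inj_on_def by blast
    qed
    finally show "(\<Sum>v\<in>{x. x \<in> set vs \<and> vpos x = p}. G s M vs v) \<le> 1" .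
  qed
  also have "\<dots> = real n * real n" by simp
  finally show ?thesis .
qed

lemma arith1:
  fixes a u d p q N :: real
  assumes "a = (u - d) / 2" "3/2 * u - 5/2 * d + p - q \<le> N"
  shows "4 * a + (p - q - (d + u) / 2) \<le> N"
  using assms by (simp add: field_simps)

lemma main_bound:
  assumes lk: "legendrian_knot_mosaic n M vs"
  shows "4 * \<bar>rot_mosaic vs\<bar> + tb_mosaic M vs \<le> real n ^ 2"
proof -
  have b1: "(2*1 - 1/2) * real (down_cusps vs) + (-2*1 - 1/2) * real (up_cusps vs)
     + real (pos_crossings M vs) - real (neg_crossings M vs) \<le> real n * real n"
    using sum_G_le[OF lk, of 1] sum_G_eq[OF lk, of 1] by simp
  have b2: "(2*(-1) - 1/2) * real (down_cusps vs) + (-2*(-1) - 1/2) * real (up_cusps vs)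
     + real (pos_crossings M vs) - real (neg_crossings M vs) \<le> real n * real n"
    using sum_G_le[OF lk, of "-1"] sum_G_eq[OF lk, of "-1"] by simp
  have b1': "3/2 * real (down_cusps vs) - 5/2 * real (up_cusps vs)
     + real (pos_crossings M vs) - real (neg_crossings M vs) \<le> real n * real n" using b1 by simp
  have b2': "3/2 * real (up_cusps vs) - 5/2 * real (down_cusps vs)
     + real (pos_crossings M vs) - real (neg_crossings M vs) \<le> real n * real n" using b2 by simp
  show ?thesis
  proof (cases "real (down_cusps vs) \<le> real (up_cusps vs)")
    case True
    then have "\<bar>rot_mosaic vs\<bar> = (real (up_cusps vs) - real (down_cusps vs)) / 2"
      by (simp add: rot_mosaic_def)
    then show ?thesis using arith1[OF _ b2'] unfolding tb_mosaic_def power2_eq_square of_nat_add by simp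
  next
    case False
    then have "\<bar>rot_mosaic vs\<bar> = (real (down_cusps vs) - real (up_cusps vs)) / 2"
      by (simp add: rot_mosaic_def)
    then show ?thesis using arith1[OF _ b1'] unfolding tb_mosaic_def power2_eq_square of_nat_add by (simp add: add.commute)
  qed
qed

theorem theorem2p3:
  fixes depicts :: "nat \<Rightarrow> mosaic \<Rightarrow> visit list \<Rightarrow> 'k \<Rightarrow> bool"
    and tbL rotL :: "'k \<Rightarrow> real"
    and \<Lambda> :: 'k
  assumes depicts_mosaic: "\<And>n M vs K. depicts n M vs K \<Longrightarrow> legendrian_knot_mosaic n M vs"
    and invariants: "\<And>n M vs K. depicts n M vs K \<Longrightarrow>
           tb_mosaic M vs = tbL K \<and> \<bar>rot_mosaic vs\<bar> = \<bar>rotL K\<bar>"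
    and has_mosaic: "\<exists>n M vs. depicts n M vs \<Lambda>"
    and hyp: "4 * \<bar>rotL \<Lambda>\<bar> + tbL \<Lambda> \<ge> 0"
  shows "int (mosaic_number depicts \<Lambda>) \<ge> \<lceil>sqrt (4 * \<bar>rotL \<Lambda>\<bar> + tbL \<Lambda>)\<rceil>"
proof -
  define m where "m = mosaic_number depicts \<Lambda>"
  have "\<exists>M vs. depicts m M vs \<Lambda>"
    unfolding m_def mosaic_number_def using has_mosaic by (rule LeastI_ex)
  then obtain M vs where d: "depicts m M vs \<Lambda>" by blast
  have "4 * \<bar>rotL \<Lambda>\<bar> + tbL \<Lambda> \<le> real m ^ 2"
    using main_bound[OF depicts_mosaic[OF d]] invariants[OF d] by simp
  then have "sqrt (4 * \<bar>rotL \<Lambda>\<bar> + tbL \<Lambda>) \<le> real m"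
    by (metis of_nat_0_le_iff real_sqrt_le_iff real_sqrt_abs abs_of_nonneg)
  then have "\<lceil>sqrt (4 * \<bar>rotL \<Lambda>\<bar> + tbL \<Lambda>)\<rceil> \<le> int m"
    by (simp add: ceiling_le_iff)
  then show ?thesis by (simp add: m_def)
qed

end
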